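(* Let $A$ be an $n\times n$ matrix with a designated set of large positions, and let $(X,Y)$ be a restriction with $m=|X|\ge2$ that is $q$-good for some $q<\frac{1}{m(m-1)}$. Then $(X,Y)$ has a $0$-strong line, i.e. a row $i\in X$ with $(i,j)$ large for all $j\in Y$, or a column $j\in Y$ with $(i,j)$ large for all $i\in X$.
   Context: Let $A=(a_{ij})_{i,j\in[n]}$ with a designated set $L\subseteq[n]\times[n]$ of large positions. A restriction is $(X,Y)$ with $X,Y\subseteq[n]$, $|X|=|Y|$; a generalized diagonal of $A[X,Y]$ is $\{(i,\sigma(i)):i\in X\}$ for a bijection $\sigma:X\to Y$, random meaning uniform $\sigma$; it is good if it contains exactly one large position; $(X,Y)$ is $q$-good if a random generalized diagonal is good with probability $\ge1-q$. *)

theory Defs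
  imports Complex_Main "HOL-Library.FuncSet"
begin

definition gen_diags :: "nat set \<Rightarrow> nat set \<Rightarrow> (nat \<Rightarrow> nat) set" where
  "gen_diags X Y = {\<sigma> \<in> X \<rightarrow>\<^sub>E Y. bij_betw \<sigma> X Y}"

definition good_diag :: "(nat \<times> nat) set \<Rightarrow> nat set \<Rightarrow> (nat \<Rightarrow> nat) \<Rightarrow> bool" where
  "good_diag L X \<sigma> \<longleftrightarrow> card {i \<in> X. (i, \<sigma> i) \<in> L} = 1"

definition q_good :: "(nat \<times> nat) set \<Rightarrow> real \<Rightarrow> nat set \<Rightarrow> nat set \<Rightarrow> bool" where
  "q_good L q X Y \<longleftrightarrow>
     real (card {\<sigma> \<in> gen_diags X Y. good_diag L X \<sigma>}) / real (card (gen_diags X Y)) \<ge> 1 - q"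

end

theory Submission
  imports Defs "HOL-Combinatorics.Permutations"
begin

lemma card_gd:
  assumes "finite X" "finite Y" "card X = card Y"
  shows "card (gen_diags X Y) = fact (card X)"
proof -
  obtain h where h: "bij_betw h Y X" using finite_same_card_bij assms by metis
  define g where "g = inv_into Y h"
  have g: "bij_betw g X Y" unfolding g_def by (rule bij_betw_inv_into[OF h])
  define F where "F = (\<lambda>\<sigma>. \<lambda>x. if x \<in> X then h (\<sigma> x) else x)"
  define G where "G = (\<lambda>p. restrict (\<lambda>x. g (p x)) X)"
  have "bij_betw F (gen_diags X Y) {p. p permutes X}"
  proof (rule bij_betw_byWitness[where f'=G])
    show "\<forall>a\<in>gen_diags X Y. G (F a) = a"
    proof
      fix a assume a: "a \<in> gen_diags X Y"
      show "G (F a) = a"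
      proof
        fix x show "G (F a) x = a x"
          using a h unfolding G_def F_def g_def gen_diags_def
          by (auto simp: PiE_def extensional_def bij_betw_def inv_into_f_f Pi_iff)
      qed
    qed
    show "\<forall>a\<in>{p. p permutes X}. F (G a) = a"
    proof
      fix p assume p: "p \<in> {p. p permutes X}"
      show "F (G p) = p"
      proof
        fix x show "F (G p) x = p x"
        proof (cases "x \<in> X")
          case True
          then have "p x \<in> X" using p permutes_in_image[of p X x] by auto
          then show ?thesis using True h unfolding G_def F_def g_def
            by (simp add: bij_betw_def f_inv_into_f)
        next
          case False then show ?thesis using p unfolding F_def by (auto simp: permutes_def)
        qed
      qed
    qed
    show "F ` gen_diags X Y \<subseteq> {p. p permutes X}"
    proof
      fix p assume "p \<in> F ` gen_diags X Y"
      then obtain a where a: "a \<in> gen_diags X Y" and pa: "p = F a" by auto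
      have "bij_betw (h \<circ> a) X X" using a h unfolding gen_diags_def by (auto intro: bij_betw_trans)
      then have "bij_betw p X X" unfolding pa F_def by (rule bij_betw_cong[THEN iffD1, rotated]) auto
      then show "p \<in> {p. p permutes X}" by (auto intro!: bij_imp_permutes simp: pa F_def)
    qed
    show "G ` {p. p permutes X} \<subseteq> gen_diags X Y"
    proof
      fix a assume "a \<in> G ` {p. p permutes X}"
      then obtain p where p: "p permutes X" and ap: "a = G p" by auto
      have "bij_betw (g \<circ> p) X Y" using p g by (auto intro: bij_betw_trans permutes_imp_bij)
      then have "bij_betw a X Y" unfolding ap G_def by (rule bij_betw_cong[THEN iffD1, rotated]) auto
      moreover have "a \<in> X \<rightarrow>\<^sub>E Y" using `bij_betw a X Y` unfolding ap G_def
        by (auto simp: bij_betw_def)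
      ultimately show "a \<in> gen_diags X Y" unfolding gen_diags_def by auto
    qed
  qed
  then have "card (gen_diags X Y) = card {p. p permutes X}" by (rule bij_betw_same_card)
  also have "\<dots> = fact (card X)" using card_permutations assms by blast
  finally show ?thesis .
qed

lemma upd_gd:
  assumes t: "\<tau> \<in> gen_diags X' Y'" and "i \<notin> X'" "i' \<notin> X'" "i \<noteq> i'" "a \<notin> Y'" "b \<notin> Y'" "a \<noteq> b"
  shows "\<tau>(i:=a, i':=b) \<in> gen_diags (insert i (insert i' X')) (insert a (insert b Y'))"
proof -
  have tb: "bij_betw \<tau> X' Y'" and te: "\<tau> \<in> X' \<rightarrow>\<^sub>E Y'" using t unfolding gen_diags_def by auto
  have "bij_betw (\<tau>(i:=a, i':=b)) X' Y'"
    by (rule bij_betw_cong[THEN iffD1, OF _ tb]) (use assms in auto)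
  moreover have "bij_betw (\<tau>(i:=a, i':=b)) {i,i'} {a,b}"
    using assms by (auto simp: bij_betw_def inj_on_def)
  ultimately have "bij_betw (\<tau>(i:=a, i':=b)) (X' \<union> {i,i'}) (Y' \<union> {a,b})"
    using assms by (intro bij_betw_combine) auto
  moreover have "X' \<union> {i,i'} = insert i (insert i' X')" "Y' \<union> {a,b} = insert a (insert b Y')" by auto
  moreover have "\<tau>(i:=a, i':=b) \<in> insert i (insert i' X') \<rightarrow>\<^sub>E insert a (insert b Y')"
    using te by (auto simp: PiE_def Pi_def extensional_def)
  ultimately show ?thesis unfolding gen_diags_def by auto
qed

theorem lemma2p14:
  fixes n m :: nat and L :: "(nat \<times> nat) set" and X Y :: "nat set" and q :: real
  assumes "L \<subseteq> {..<n} \<times> {..<n}"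
    and "X \<subseteq> {..<n}" and "Y \<subseteq> {..<n}" and "card X = card Y"
    and "m = card X" and "m \<ge> 2"
    and "q_good L q X Y"
    and "q < 1 / (real m * (real m - 1))"
  shows "(\<exists>i\<in>X. \<forall>j\<in>Y. (i, j) \<in> L) \<or> (\<exists>j\<in>Y. \<forall>i\<in>X. (i, j) \<in> L)"
proof (rule ccontr)
  assume neg: "\<not> ?thesis"
  have finX: "finite X" using assms(5,6) by (intro card_ge_0_finite) simp
  have finY: "finite Y" using assms(4,5,6) by (intro card_ge_0_finite) simp
  define D where "D = gen_diags X Y"
  define G where "G = {\<sigma> \<in> D. good_diag L X \<sigma>}"
  define B where "B = {\<sigma> \<in> D. \<not> good_diag L X \<sigma>}"
  have cD: "card D = fact m" unfolding D_def using card_gd finX finY assms by simp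
  have finD: "finite D" using cD by (metis card.infinite fact_nonzero)
  have GB: "card G + card B = card D"
  proof -
    have "G \<union> B = D" "G \<inter> B = {}" unfolding G_def B_def by auto
    moreover have "finite G" "finite B" using finD unfolding G_def B_def by auto
    ultimately show ?thesis by (metis card_Un_disjoint)
  qed
  have ratio: "real (card G) / real (card D) \<ge> 1 - q"
    using assms(7) unfolding q_good_def G_def D_def by simp
  have mpos: "real m * (real m - 1) \<ge> 2" using assms(6)
  proof -
    have "real m \<ge> 2" using assms(6) by simp
    then have "real m * (real m - 1) \<ge> 2 * 1" by (intro mult_mono) auto
    then show ?thesis by simp
  qed
  have qlt1: "q < 1"
  proof -
    have "1 / (real m * (real m - 1)) \<le> 1/2" using mpos by (simp add: field_simps)
    then show ?thesis using assms(8) by simp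
  qed
  show False
  proof (cases "\<exists>i\<in>X. \<exists>j\<in>Y. (i,j) \<in> L")
    case False
    have "G = {}"
    proof -
      { fix \<sigma> assume "\<sigma> \<in> G"
        then have s: "\<sigma> \<in> gen_diags X Y" "card {i \<in> X. (i, \<sigma> i) \<in> L} = 1"
          unfolding G_def D_def good_diag_def by auto
        have "{i \<in> X. (i, \<sigma> i) \<in> L} = {}" using s(1) False unfolding gen_diags_def
          by (auto simp: PiE_def Pi_def)
        with s(2) have False by simp }
      then show ?thesis by auto
    qed
    then show False using ratio qlt1 by simp
  next
    case True
    then obtain i j where ij: "i \<in> X" "j \<in> Y" "(i,j) \<in> L" by auto
    obtain j' where j': "j' \<in> Y" "(i,j') \<notin> L" using neg ij by auto
    obtain i' where i': "i' \<in> X" "(i',j) \<notin> L" using neg ij by auto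
    have ii: "i \<noteq> i'" and jj: "j \<noteq> j'" using ij i' j' by auto
    define X' where "X' = X - {i,i'}"
    define Y' where "Y' = Y - {j,j'}"
    have cX': "card X' = m - 2" unfolding X'_def using finX ij i' ii assms(5) by (simp add: card_Diff_subset)
    have cY': "card Y' = m - 2" unfolding Y'_def using finY ij j' jj assms(4,5) by (simp add: card_Diff_subset)
    have cD': "card (gen_diags X' Y') = fact (m-2)"
      using card_gd[of X' Y'] cX' cY' finX finY unfolding X'_def Y'_def by simp
    have XX: "X = insert i (insert i' X')" using ij i' unfolding X'_def by auto
    have YY1: "Y = insert j (insert j' Y')" using ij j' unfolding Y'_def by auto
    have YY2: "Y = insert j' (insert j Y')" using ij j' unfolding Y'_def by auto
    define c1 where "c1 = (\<lambda>\<tau>::nat\<Rightarrow>nat. \<tau>(i:=j, i':=j'))"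
    define c2 where "c2 = (\<lambda>\<tau>::nat\<Rightarrow>nat. \<tau>(i:=j', i':=j))"
    define \<phi> where "\<phi> = (\<lambda>\<tau>. if good_diag L X (c1 \<tau>) then c2 \<tau> else c1 \<tau>)"
    have "card (gen_diags X' Y') \<le> card B"
    proof (rule card_inj_on_le)
      show "finite B" using finD unfolding B_def by auto
      show "inj_on \<phi> (gen_diags X' Y')"
      proof (rule inj_onI)
        fix t1 t2 assume t1: "t1 \<in> gen_diags X' Y'" and t2: "t2 \<in> gen_diags X' Y'" and e: "\<phi> t1 = \<phi> t2"
        show "t1 = t2"
        proof
          fix x show "t1 x = t2 x"
          proof (cases "x \<in> X'")
            case True
            then have "x \<noteq> i" "x \<noteq> i'" unfolding X'_def by auto
            then have "\<phi> t1 x = t1 x" "\<phi> t2 x = t2 x" unfolding \<phi>_def c1_def c2_def by auto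
            then show ?thesis using e by metis
          next
            case False then show ?thesis using t1 t2 unfolding gen_diags_def by (auto simp: PiE_def extensional_def)
          qed
        qed
      qed
      show "\<phi> ` gen_diags X' Y' \<subseteq> B"
      proof
        fix s assume "s \<in> \<phi> ` gen_diags X' Y'"
        then obtain \<tau> where t: "\<tau> \<in> gen_diags X' Y'" and s: "s = \<phi> \<tau>" by auto
        have niX: "i \<notin> X'" "i' \<notin> X'" and njY: "j \<notin> Y'" "j' \<notin> Y'" unfolding X'_def Y'_def by auto
        have m1: "c1 \<tau> \<in> D" unfolding c1_def D_def
          using upd_gd[OF t niX ii njY jj] XX YY1 by simp
        have m2: "c2 \<tau> \<in> D" unfolding c2_def D_def
          using upd_gd[OF t niX ii njY(2,1)] jj XX YY2 by simp
        define S where "S = {x \<in> X'. (x, \<tau> x) \<in> L}"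
        have S2: "{x \<in> X. (x, c2 \<tau> x) \<in> L} = S"
          unfolding S_def c2_def using XX ii niX j' i' by auto
        have S1: "insert i S \<subseteq> {x \<in> X. (x, c1 \<tau> x) \<in> L}"
          unfolding S_def c1_def using XX ii niX ij by auto
        have finS1: "finite {x \<in> X. (x, c1 \<tau> x) \<in> L}" using finX by auto
        have "\<not> good_diag L X (c1 \<tau>) \<or> \<not> good_diag L X (c2 \<tau>)"
        proof (rule ccontr)
          assume "\<not> ?thesis"
          then have g1: "card {x \<in> X. (x, c1 \<tau> x) \<in> L} = 1" and g2: "card S = 1"
            unfolding good_diag_def S2 by auto
          have "i \<notin> S" "finite S" unfolding S_def using niX finX X'_def by auto
          then have "card (insert i S) = 2" using g2 by simp
          then show False using card_mono[OF finS1 S1] g1 by simp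
        qed
        then show "s \<in> B" unfolding B_def s \<phi>_def using m1 m2 by auto
      qed
    qed
    then have cB: "card B \<ge> fact (m-2)" using cD' by simp
    obtain k where k: "m = Suc (Suc k)" using assms(6) by (metis add_2_eq_Suc le_Suc_ex)
    have fm: "real (fact m) = real m * (real m - 1) * real (fact (m-2))"
      unfolding k by (simp add: algebra_simps)
    define f where "f = real (fact (m-2))"
    define M where "M = real m * (real m - 1)"
    have fpos: "f > 0" unfolding f_def by simp
    have Mpos: "M \<ge> 2" using mpos unfolding M_def .
    have "real (card G) \<le> M * f - f"
      using GB cB cD fm unfolding M_def f_def by (metis add_diff_cancel_left' of_nat_add of_nat_le_iff add_le_cancel_left diff_le_mono2 of_nat_diff le_add2 ordered_cancel_comm_monoid_diff_class.le_diff_conv2 le_diff_eq)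
    then have "real (card G) / (M * f) \<le> (M * f - f) / (M * f)"
      using fpos Mpos by (intro divide_right_mono) auto
    also have "\<dots> = 1 - 1 / M" using fpos Mpos by (simp add: field_simps)
    finally have "real (card G) / real (card D) \<le> 1 - 1/M" using cD fm unfolding M_def f_def by simp
    then show False using ratio assms(8) unfolding M_def by simp
  qed
qed
end
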